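(* Let $H$ be a complete graph and let $\mathbf{E}=(E_0,E_1,E_2)$ be an ordered partition of $E(H)$. Let $M$ be a matching in $H$ with $M\subset E_0$ and $|M|<\lfloor\frac12|V(H)|\rfloor$, and let $X=V(H)-V(M)$. Then (1) if $E(H[X])\cap(E_0\cup E_1)\ne\emptyset$, then $H$ contains a good matching for $\mathbf{E}$ of order $|M|+1$; and (2) if $|E_H(V(M),X)\cap E_0|>|E_H(V(M),X)\cap E_2|$, then $H$ contains a good matching for $\mathbf{E}$ of order $|M|+1$.
   Context: An ordered partition $(E_0,E_1,E_2)$ of a set is a triple of pairwise disjoint (possibly empty) sets with that union. A matching $M$ is a good matching for $\mathbf{E}$ if $M\cap E_2=\emptyset$ and $|M\cap E_1|\le1$; the order of a matching is its number of edges. $V(M)$ is the set of endpoints of edges of $M$; for disjoint $A,B\subset V(H)$, $E_H(A,B)$ is the set of edges of $H$ with one end in $A$ and the other in $B$. *)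

theory Defs
  imports Main
begin

text \<open>Simple graphs: edges are 2-element vertex sets. The complete graph on a
finite vertex set V has edge set complete_edges V.\<close>

definition complete_edges :: "'a set \<Rightarrow> 'a set set" where
  "complete_edges V = {e. e \<subseteq> V \<and> card e = 2}"

definition matching :: "'a set set \<Rightarrow> bool" where
  "matching M \<longleftrightarrow> (\<forall>e\<in>M. \<forall>f\<in>M. e \<noteq> f \<longrightarrow> e \<inter> f = {})"

definition ordered_partition3 :: "'a set \<Rightarrow> 'a set \<Rightarrow> 'a set \<Rightarrow> 'a set \<Rightarrow> bool" where
  "ordered_partition3 E0 E1 E2 E \<longleftrightarrow>
     E0 \<union> E1 \<union> E2 = E \<and> E0 \<inter> E1 = {} \<and> E0 \<inter> E2 = {} \<and> E1 \<inter> E2 = {}"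

definition good_matching :: "'a set set \<Rightarrow> 'a set set \<Rightarrow> 'a set set \<Rightarrow> bool" where
  "good_matching E1 E2 M \<longleftrightarrow> matching M \<and> M \<inter> E2 = {} \<and> card (M \<inter> E1) \<le> 1"

definition verts :: "'a set set \<Rightarrow> 'a set" where
  "verts M = \<Union>M"

definition edges_between :: "'a set set \<Rightarrow> 'a set \<Rightarrow> 'a set \<Rightarrow> 'a set set" where
  "edges_between E A B = {e \<in> E. \<exists>a\<in>A. \<exists>b\<in>B. e = {a, b}}"

definition induced_edges :: "'a set set \<Rightarrow> 'a set \<Rightarrow> 'a set set" where
  "induced_edges E X = {e \<in> E. e \<subseteq> X}"

end

theory Submission
  imports Defs
begin

lemma key:
  assumes "finite X" "card X \<ge> 2" "A0 \<inter> A2 = {}" "B0 \<inter> B2 = {}"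
    "A0 \<subseteq> X" "A2 \<subseteq> X" "B0 \<subseteq> X" "B2 \<subseteq> X"
    "card A0 + card B0 > card A2 + card B2"
  shows "(\<exists>x\<in>A0. \<exists>y\<in>X-B2. x\<noteq>y) \<or> (\<exists>x\<in>B0. \<exists>y\<in>X-A2. x\<noteq>y)"
proof (rule ccontr)
  assume n: "\<not> ?thesis"
  have fA: "finite A0" "finite A2" "finite B0" "finite B2"
    using assms finite_subset by blast+
  have cA: "card A0 + card A2 \<le> card X" "card B0 + card B2 \<le> card X"
    using assms fA card_Un_disjoint[of A0 A2] card_Un_disjoint[of B0 B2]
      card_mono[of X "A0 \<union> A2"] card_mono[of X "B0 \<union> B2"] by auto
  have cd: "card (X - S) = card X - card S" if "S \<subseteq> X" for S
    using card_Diff_subset[of S X] assms(1) finite_subset that by blast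
  have le1: "card S \<le> 1" if "S \<subseteq> {z::'a}" for S z
    using that card_mono[of "{z}" S] by simp
  show False
  proof (cases "A0 = {}")
    case False
    then obtain x where x: "x \<in> A0" by blast
    have s1: "X - B2 \<subseteq> {x}" using n x by auto
    hence b2: "card X - card B2 \<le> 1" using cd[OF assms(8)] le1 by metis
    show False
    proof (cases "B0 = {}")
      case True
      have "card A0 \<ge> card X" using assms(9) b2 True by simp
      hence "A0 = X" by (rule card_seteq[OF assms(1) assms(5)])
      have "X - B2 = {}"
      proof -
        { fix y assume y: "y \<in> X - B2"
          obtain z where "z \<in> X" "z \<noteq> y"
          proof -
            have "\<not> X \<subseteq> {y}" using assms(2) le1[of X y] by auto
            thus ?thesis using that by blast
          qed
          hence False using n y \<open>A0 = X\<close> by blast }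
        thus ?thesis by blast
      qed
      hence "card X - card B2 = 0" using cd[OF assms(8)] by (metis card.empty)
      thus False using assms(9) True cA by simp
    next
      case False
      then obtain y where y: "y \<in> B0" by blast
      have "X - A2 \<subseteq> {y}" using n y by auto
      hence a2: "card X - card A2 \<le> 1" using cd[OF assms(6)] le1 by metis
      have "A0 \<subseteq> {y}" using \<open>X - A2 \<subseteq> {y}\<close> assms by blast
      have "B0 \<subseteq> {x}" using s1 assms by blast
      have "card A0 \<le> 1" "card B0 \<le> 1" using le1 \<open>A0 \<subseteq> {y}\<close> \<open>B0 \<subseteq> {x}\<close> by auto
      thus False using assms(2,9) a2 b2 by linarith
    qed
  next
    case True
    then obtain y where y: "y \<in> B0" using assms(9) by fastforce
    have "X - A2 \<subseteq> {y}" using n y by auto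
    hence a2: "card X - card A2 \<le> 1" using cd[OF assms(6)] le1 by metis
    have "card B0 \<ge> card X" using assms(9) a2 True by simp
    hence "B0 = X" by (rule card_seteq[OF assms(1) assms(7)])
    have "X - A2 = {}"
    proof -
      { fix z assume z: "z \<in> X - A2"
        obtain w where "w \<in> X" "w \<noteq> z"
        proof -
          have "\<not> X \<subseteq> {z}" using assms(2) le1[of X z] by auto
          thus ?thesis using that by blast
        qed
        hence False using n z \<open>B0 = X\<close> by blast }
      thus ?thesis by blast
    qed
    hence "card X - card A2 = 0" using cd[OF assms(6)] by (metis card.empty)
    thus False using assms(9) True cA by simp
  qed
qed

lemma count:
  assumes "finite V" "M \<subseteq> complete_edges V" "matching M"
  shows "card (edges_between (complete_edges V) (verts M) (V - verts M) \<inter> F)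
       = (\<Sum>e\<in>M. \<Sum>a\<in>e. card {x\<in>V - verts M. {a,x} \<in> F})"
proof -
  let ?X = "V - verts M"
  have fM: "finite M" using assms(1,2) finite_subset[of M "Pow V"]
    by (auto simp: complete_edges_def)
  have vV: "verts M \<subseteq> V" using assms(2) by (auto simp: verts_def complete_edges_def)
  have fv: "finite (verts M)" using vV assms(1) finite_subset by blast
  have eq: "edges_between (complete_edges V) (verts M) ?X \<inter> F
      = (\<Union>a\<in>verts M. (\<lambda>x. {a,x}) ` {x\<in>?X. {a,x} \<in> F})"
  proof (rule set_eqI, rule iffI)
    fix e assume "e \<in> edges_between (complete_edges V) (verts M) ?X \<inter> F"
    thus "e \<in> (\<Union>a\<in>verts M. (\<lambda>x. {a,x}) ` {x\<in>?X. {a,x} \<in> F})"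
      by (auto simp: edges_between_def)
  next
    fix e assume "e \<in> (\<Union>a\<in>verts M. (\<lambda>x. {a,x}) ` {x\<in>?X. {a,x} \<in> F})"
    then obtain a x where ax: "a \<in> verts M" "x \<in> ?X" "{a,x} \<in> F" "e = {a,x}" by blast
    have "a \<noteq> x" using ax by auto
    hence "card {a,x} = 2" by simp
    hence "e \<in> complete_edges V" using ax vV by (auto simp: complete_edges_def)
    thus "e \<in> edges_between (complete_edges V) (verts M) ?X \<inter> F"
      using ax by (auto simp: edges_between_def)
  qed
  have "card (\<Union>a\<in>verts M. (\<lambda>x. {a,x}) ` {x\<in>?X. {a,x} \<in> F})
      = (\<Sum>a\<in>verts M. card ((\<lambda>x. {a,x}) ` {x\<in>?X. {a,x} \<in> F}))"
  proof (rule card_UN_disjoint[OF fv])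
    show "\<forall>i\<in>verts M. finite ((\<lambda>x. {i, x}) ` {x \<in> ?X. {i, x} \<in> F})"
      using assms(1) by auto
    show "\<forall>i\<in>verts M. \<forall>j\<in>verts M. i \<noteq> j \<longrightarrow>
      (\<lambda>x. {i, x}) ` {x \<in> ?X. {i, x} \<in> F} \<inter> (\<lambda>x. {j, x}) ` {x \<in> ?X. {j, x} \<in> F} = {}"
      by (auto simp: doubleton_eq_iff)
  qed
  also have "\<dots> = (\<Sum>a\<in>verts M. card {x\<in>?X. {a,x} \<in> F})"
  proof (rule sum.cong[OF refl])
    fix a assume "a \<in> verts M"
    hence "inj_on (\<lambda>x. {a,x}) {x\<in>?X. {a,x} \<in> F}"
      by (auto simp: inj_on_def doubleton_eq_iff)
    thus "card ((\<lambda>x. {a,x}) ` {x\<in>?X. {a,x} \<in> F}) = card {x\<in>?X. {a,x} \<in> F}"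
      by (rule card_image)
  qed
  also have "\<dots> = (\<Sum>e\<in>M. \<Sum>a\<in>e. card {x\<in>?X. {a,x} \<in> F})"
  proof -
    have h1: "\<forall>A\<in>M. finite A" using assms(1,2)
      unfolding complete_edges_def by (blast intro: finite_subset)
    have h2: "\<forall>A\<in>M. \<forall>B\<in>M. A \<noteq> B \<longrightarrow> A \<inter> B = {}" using assms(3) by (auto simp: matching_def)
    show ?thesis unfolding verts_def using sum.Union_disjoint[OF h1 h2] by simp
  qed
  finally show ?thesis using eq by simp
qed

theorem lemma12:
  fixes V :: "'a set" and E0 E1 E2 M :: "'a set set"
  assumes "finite V"
    and "ordered_partition3 E0 E1 E2 (complete_edges V)"
    and "M \<subseteq> complete_edges V" and "matching M"
    and "M \<subseteq> E0"
    and "card M < card V div 2"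
  shows "(induced_edges (complete_edges V) (V - verts M) \<inter> (E0 \<union> E1) \<noteq> {} \<longrightarrow>
           (\<exists>M'. M' \<subseteq> complete_edges V \<and> good_matching E1 E2 M' \<and> card M' = card M + 1))
       \<and> (card (edges_between (complete_edges V) (verts M) (V - verts M) \<inter> E0)
            > card (edges_between (complete_edges V) (verts M) (V - verts M) \<inter> E2) \<longrightarrow>
           (\<exists>M'. M' \<subseteq> complete_edges V \<and> good_matching E1 E2 M' \<and> card M' = card M + 1))"
proof (intro conjI impI)
  let ?X = "V - verts M"
  have fM: "finite M" using assms(1,3) finite_subset[of M "Pow V"]
    by (auto simp: complete_edges_def)
  have part: "E0 \<union> E1 \<union> E2 = complete_edges V" "E0 \<inter> E1 = {}" "E0 \<inter> E2 = {}" "E1 \<inter> E2 = {}"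
    using assms(2) by (auto simp: ordered_partition3_def)
  have ME1: "M \<inter> E1 = {}" "M \<inter> E2 = {}" using assms(5) part by blast+
  {
    assume "induced_edges (complete_edges V) ?X \<inter> (E0 \<union> E1) \<noteq> {}"
    then obtain e where e: "e \<in> complete_edges V" "e \<subseteq> ?X" "e \<in> E0 \<union> E1"
      by (auto simp: induced_edges_def)
    have ne: "e \<noteq> {}" using e(1) by (auto simp: complete_edges_def)
    have eM: "e \<notin> M" using e(2) ne by (auto simp: verts_def)
    have m: "matching (insert e M)" using assms(4) e(2) ne
      unfolding matching_def verts_def by blast
    have "insert e M \<inter> E2 = {}" using e(3) part ME1 by blast
    moreover have "card (insert e M \<inter> E1) \<le> 1"
    proof -
      have "insert e M \<inter> E1 \<subseteq> {e}" using ME1 by blast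
      thus ?thesis using card_mono[of "{e}"] by fastforce
    qed
    ultimately show "\<exists>M'. M' \<subseteq> complete_edges V \<and> good_matching E1 E2 M' \<and> card M' = card M + 1"
      using m e(1) assms(3) eM fM
      by (intro exI[of _ "insert e M"]) (auto simp: good_matching_def)
  }
  assume lt: "card (edges_between (complete_edges V) (verts M) ?X \<inter> E2)
      < card (edges_between (complete_edges V) (verts M) ?X \<inter> E0)"
  define N where "N F a = card {x\<in>?X. {a,x} \<in> F}" for F a
  have "(\<Sum>e\<in>M. \<Sum>a\<in>e. N E2 a) < (\<Sum>e\<in>M. \<Sum>a\<in>e. N E0 a)"
    using lt count[OF assms(1,3,4)] unfolding N_def by metis
  then obtain e where eM: "e \<in> M" and elt: "(\<Sum>a\<in>e. N E2 a) < (\<Sum>a\<in>e. N E0 a)"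
    using sum_mono[of M "\<lambda>e. \<Sum>a\<in>e. N E0 a" "\<lambda>e. \<Sum>a\<in>e. N E2 a"] not_le by blast
  have "e \<in> complete_edges V" using eM assms(3) by blast
  then obtain u v where uv: "e = {u,v}" "u \<noteq> v" "u \<in> V" "v \<in> V"
    unfolding complete_edges_def by (auto simp: card_2_iff)
  have uvM: "u \<in> verts M" "v \<in> verts M" using eM uv by (auto simp: verts_def)
  have fX: "finite ?X" using assms(1) by simp
  have cv: "card (verts M) \<le> 2 * card M"
  proof -
    have "card (verts M) \<le> (\<Sum>e\<in>M. card e)" unfolding verts_def
      by (rule card_Union_le_sum_card)
    also have "\<dots> = (\<Sum>e\<in>M. 2)"
      using assms(3) by (intro sum.cong) (auto simp: complete_edges_def)
    finally show ?thesis by simp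
  qed
  have vV: "verts M \<subseteq> V" using assms(3) by (auto simp: verts_def complete_edges_def)
  have cX: "card ?X \<ge> 2"
    using card_Diff_subset[OF finite_subset[OF vV assms(1)] vV] cv assms(6)
      card_mono[OF assms(1) vV] by linarith
  define A0 where "A0 = {x\<in>?X. {u,x} \<in> E0}"
  define A2 where "A2 = {x\<in>?X. {u,x} \<in> E2}"
  define B0 where "B0 = {x\<in>?X. {v,x} \<in> E0}"
  define B2 where "B2 = {x\<in>?X. {v,x} \<in> E2}"
  have "card A0 + card B0 > card A2 + card B2"
    using elt uv unfolding N_def A0_def A2_def B0_def B2_def by simp
  moreover have "A0 \<inter> A2 = {}" "B0 \<inter> B2 = {}" using part(3)
    by (auto simp: A0_def A2_def B0_def B2_def)
  moreover have "A0 \<subseteq> ?X" "A2 \<subseteq> ?X" "B0 \<subseteq> ?X" "B2 \<subseteq> ?X"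
    by (auto simp: A0_def A2_def B0_def B2_def)
  ultimately have disj: "(\<exists>x\<in>A0. \<exists>y\<in>?X-B2. x\<noteq>y) \<or> (\<exists>x\<in>B0. \<exists>y\<in>?X-A2. x\<noteq>y)"
    using key[OF fX cX] by blast
  obtain a b x y where ab: "e = {a,b}" "a \<noteq> b" "a \<in> verts M" "b \<in> verts M"
    "x \<in> ?X" "y \<in> ?X" "x \<noteq> y" "{a,x} \<in> E0" "{b,y} \<notin> E2"
  proof -
    from disj show ?thesis
    proof
      assume "\<exists>x\<in>A0. \<exists>y\<in>?X-B2. x\<noteq>y"
      then obtain x y where xy: "x\<in>A0" "y\<in>?X-B2" "x\<noteq>y" by blast
      show ?thesis
        apply (rule that[of u v x y])
        using xy uv uvM unfolding A0_def B2_def by auto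
    next
      assume "\<exists>x\<in>B0. \<exists>y\<in>?X-A2. x\<noteq>y"
      then obtain x y where xy: "x\<in>B0" "y\<in>?X-A2" "x\<noteq>y" by blast
      show ?thesis
        apply (rule that[of v u x y])
        using xy uv uvM unfolding B0_def A2_def by auto
    qed
  qed
  have "a \<noteq> x" "b \<noteq> y" using ab by auto
  have axV: "{a,x} \<in> complete_edges V" "{b,y} \<in> complete_edges V"
    using ab vV \<open>a \<noteq> x\<close> \<open>b \<noteq> y\<close> by (auto simp: complete_edges_def)
  define M' where "M' = insert {a,x} (insert {b,y} (M - {e}))"
  have n1: "{a,x} \<notin> M" "{b,y} \<notin> M" using ab(5,6) by (auto simp: verts_def)
  have n2: "{a,x} \<noteq> {b,y}" using ab by (auto simp: doubleton_eq_iff)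
  have "card M' = card (M - {e}) + 2" unfolding M'_def using n1 n2 fM by auto
  hence cM': "card M' = card M + 1" using eM fM card_Diff_singleton[OF eM]
    card_gt_0_iff[of M] by auto
  have m': "matching M'"
    unfolding M'_def matching_def
  proof (intro ballI impI)
    fix f g assume f: "f \<in> insert {a,x} (insert {b,y} (M - {e}))"
      and g: "g \<in> insert {a,x} (insert {b,y} (M - {e}))" and fg: "f \<noteq> g"
    have dis: "h \<inter> {a,x} = {} \<and> h \<inter> {b,y} = {}" if "h \<in> M - {e}" for h
    proof -
      have "h \<inter> e = {}" using that assms(4) eM unfolding matching_def by blast
      moreover have "x \<notin> h" "y \<notin> h" using that ab(5,6) by (auto simp: verts_def)
      ultimately show ?thesis using ab(1) by auto
    qed
    have d2: "{a,x} \<inter> {b,y} = {}" using ab by auto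
    have mM: "f' \<inter> g' = {}" if "f'\<in>M" "g'\<in>M" "f'\<noteq>g'" for f' g'
      using assms(4) that unfolding matching_def by blast
    have d3: "{b,y} \<inter> {a,x} = {}" using d2 by blast
    have dis2: "{a,x} \<inter> h = {} \<and> {b,y} \<inter> h = {}" if "h \<in> M - {e}" for h
      using dis[OF that] by blast
    from f g show "f \<inter> g = {}"
      apply (elim insertE)
      using fg d2 d3 dis dis2 mM by simp_all
  qed
  have "M' \<inter> E2 = {}" unfolding M'_def using ab(8,9) part ME1 by blast
  moreover have "card (M' \<inter> E1) \<le> 1"
  proof -
    have "M' \<inter> E1 \<subseteq> {{b,y}}" unfolding M'_def using ab(8) part ME1 by blast
    thus ?thesis using card_mono[of "{{b,y}}"] by fastforce
  qed
  moreover have "M' \<subseteq> complete_edges V" unfolding M'_def using axV assms(3) by blast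
  ultimately show "\<exists>M'. M' \<subseteq> complete_edges V \<and> good_matching E1 E2 M' \<and> card M' = card M + 1"
    using m' cM' by (auto simp: good_matching_def)
qed

end
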